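(* The following semigroups have matricial dimension $2$: (a) the cyclic semigroups $\langle a \rangle = \{0, a, 2a, 3a, \ldots\}$ with $a \geq 2$; (b) the ordinary semigroups $S_b = \{0\} \cup \{b,b+1,b+2,\ldots\}$ with $b \geq 2$; (c) the unions $\langle a \rangle \cup S_b$ with $a,b\geq 2$.
   Context: $\mathbb{N} = \{0,1,2,\ldots\}$. A semigroup means an additive subsemigroup of $\mathbb{N}$ containing $0$; $\langle\cdot\rangle$ denotes the semigroup generated by the indicated elements. $\mathsf{M}_d(X)$ denotes the $d\times d$ matrices with entries in $X$. For $A \in \mathsf{M}_d(\mathbb{Q})$, $\mathcal{S}(A) = \{ n \in \mathbb{N} : A^n \in \mathsf{M}_d(\mathbb{Z})\}$. The matricial dimension $\dim_{\mathrm{mat}} S$ of a semigroup $S$ is the smallest $d$ such that $S = \mathcal{S}(A)$ for some $A \in \mathsf{M}_d(\mathbb{Q})$. *)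

theory Defs
  imports Main "Jordan_Normal_Form.Matrix"
begin

definition int_pow_set :: "rat mat \<Rightarrow> nat set" where
  "int_pow_set A = {n. \<forall>i < dim_row A. \<forall>j < dim_col A. (A ^\<^sub>m n) $$ (i, j) \<in> \<int>}"

definition mat_dim :: "nat set \<Rightarrow> nat" where
  "mat_dim S = (LEAST d. \<exists>A \<in> carrier_mat d d. S = int_pow_set A)"

definition cyclic_sg :: "nat \<Rightarrow> nat set" where
  "cyclic_sg a = {k * a | k. True}"

definition ordinary_sg :: "nat \<Rightarrow> nat set" where
  "ordinary_sg b = {0} \<union> {b..}"

end

theory Submission imports Defs "HOL-Number_Theory.Cong" begin


definition tri :: "rat \<Rightarrow> rat \<Rightarrow> rat \<Rightarrow> rat mat" where
  "tri l c u = mat 2 2 (\<lambda>(i,j). if i = 0 then (if j = 0 then l else c) else (if j = 0 then 0 else u))"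

primrec ee :: "rat \<Rightarrow> rat \<Rightarrow> rat \<Rightarrow> nat \<Rightarrow> rat" where
  "ee l c u 0 = 0"
| "ee l c u (Suc n) = l^n * c + ee l c u n * u"

lemma tri_carrier[simp]: "tri l c u \<in> carrier_mat 2 2"
  by (simp add: tri_def)

lemma sum2: "(\<Sum>k\<in>{0..<2::nat}. f k) = f 0 + f 1"
  by (simp add: numeral_2_eq_2)

lemma tri_pow: "tri l c u ^\<^sub>m n = tri (l^n) (ee l c u n) (u^n)"
proof (induction n)
  case 0
  show ?case by (rule eq_matI) (auto simp: tri_def less_2_cases_iff)
next
  case (Suc n)
  show ?case
    by (simp add: Suc, rule eq_matI)
       (auto simp: tri_def less_2_cases_iff scalar_prod_def sum2 algebra_simps)
qed

lemma int_pow_set_tri: "int_pow_set (tri l c u) = {n. l^n \<in> \<int> \<and> ee l c u n \<in> \<int> \<and> u^n \<in> \<int>}"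
  unfolding int_pow_set_def tri_pow
  by (auto simp: tri_def less_2_cases_iff)

lemma lift_dvd:
  fixes x :: int and mn :: nat
  assumes "int mn ^ (k+1) dvd x - 1"
  shows "int mn ^ (k+2) dvd x ^ mn - 1"
proof -
  have "int mn dvd int mn ^ (k+1)" by simp
  hence "int mn dvd x - 1" using assms by (rule dvd_trans)
  hence c: "[x = 1] (mod int mn)" by (simp only: cong_iff_dvd_diff)
  have "[(\<Sum>i<mn. x^i) = (\<Sum>i<mn. 1)] (mod int mn)"
    by (rule cong_sum) (metis c cong_pow power_one)
  moreover have "(\<Sum>i<mn. (1::int)) = int mn" by simp
  ultimately have "[(\<Sum>i<mn. x^i) = int mn] (mod int mn)" by simp
  hence "int mn dvd (\<Sum>i<mn. x^i)" by (simp only: cong_dvd_iff dvd_refl)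
  hence "int mn ^ (k+1) * int mn dvd (x - 1) * (\<Sum>i<mn. x^i)"
    using assms by (intro mult_dvd_mono)
  moreover have "x ^ mn - 1 = (x - 1) * (\<Sum>i<mn. x^i)" by (rule power_diff_1_eq)
  moreover have "int mn ^ (k+2) = int mn ^ (k+1) * int mn" by simp
  ultimately show ?thesis by metis
qed

lemma lift_iter:
  fixes a :: nat
  defines "mn \<equiv> a^a - 1"
  assumes "a \<ge> 1"
  shows "int mn ^ (k+1) dvd (int a ^ a) ^ (mn ^ k) - 1"
proof (induction k)
  case 0
  have "int mn = int a ^ a - 1" using assms by (simp add: mn_def of_nat_diff)
  then show ?case by simp
next
  case (Suc k)
  have eq: "((int a ^ a) ^ mn ^ k) ^ mn = (int a ^ a) ^ mn ^ Suc k"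
    by (simp add: power_mult[symmetric] mult_ac)
  have "Suc k + 1 = k + 2" by simp
  with lift_dvd[OF Suc] eq show ?case by metis
qed

lemma nt_facts:
  fixes a b :: nat
  defines "mn \<equiv> a^a - 1"
  defines "z \<equiv> int a ^ (mn ^ (b - 1))"
  assumes a2: "a \<ge> 2" and b1: "b \<ge> 1"
  shows "a dvd n \<Longrightarrow> int mn ^ b dvd z ^ n - 1"
    and "0 < n \<Longrightarrow> \<not> a dvd n \<Longrightarrow> \<not> int mn dvd z ^ n - 1"
proof -
  have za: "z ^ a = (int a ^ a) ^ (mn ^ (b-1))"
    by (simp add: z_def power_mult[symmetric] mult.commute)
  have K1: "int mn ^ b dvd z ^ a - 1"
    using lift_iter[of a "b-1"] a2 b1 unfolding za mn_def by simp
  {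
    assume "a dvd n"
    then obtain t where t: "n = a * t" by blast
    have "[z^a = 1] (mod int mn ^ b)" using K1 by (simp add: cong_iff_dvd_diff)
    hence "[(z^a)^t = 1^t] (mod int mn ^ b)" by (rule cong_pow)
    thus "int mn ^ b dvd z ^ n - 1" by (simp add: t power_mult cong_iff_dvd_diff)
  }
  {
    assume n0: "0 < n" and nd: "\<not> a dvd n"
    have a1: "a^a \<ge> 1" using a2 by simp
    have cop: "coprime a mn"
    proof -
      have "a^a = mn + 1" using a1 by (simp add: mn_def)
      have "coprime mn (mn + 1)" by simp
      moreover have "a dvd a^a" using a2 by (simp add: dvd_power)
      ultimately show ?thesis using \<open>a^a = mn + 1\<close>
        by (metis coprime_commute coprime_divisors dvd_refl)
    qed
    define j where "j = n * mn ^ (b-1)"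
    have zn: "z ^ n = int a ^ j" by (simp add: z_def j_def power_mult[symmetric] mult.commute)
    have jd: "\<not> a dvd j"
      using nd cop unfolding j_def by (simp add: coprime_dvd_mult_left_iff coprime_power_right_iff)
    define r where "r = j mod a"
    have r0: "0 < r" using jd by (simp add: r_def mod_greater_zero_iff_not_dvd)
    have ra: "r < a" using a2 by (simp add: r_def)
    have aa: "[int a ^ a = 1] (mod int mn)"
      using a1 by (simp add: cong_iff_dvd_diff mn_def of_nat_diff)
    have "int a ^ j = (int a ^ a) ^ (j div a) * int a ^ r"
      by (simp add: r_def power_mult[symmetric] power_add[symmetric])
    moreover have "[(int a ^ a) ^ (j div a) * int a ^ r = 1 ^ (j div a) * int a ^ r] (mod int mn)"
      by (intro cong_mult cong_pow aa cong_refl)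
    ultimately have c1: "[z ^ n = int a ^ r] (mod int mn)" by (simp add: zn)
    have "a ^ 1 \<le> a ^ r" using a2 r0 by (intro power_increasing) auto
    hence "a ^ r \<ge> 2" using a2 by simp
    hence "int (a ^ r) \<ge> 2" by linarith
    hence lo: "int a ^ r - 1 > 0" by (simp only: of_nat_power)
    have hi: "int a ^ r - 1 < int mn"
    proof -
      have "a ^ r < a ^ a" using a2 ra by (simp add: power_strict_increasing)
      hence "int (a^r) < int (a^a)" by (simp only: of_nat_less_iff)
      hence "int a ^ r < int a ^ a" by (simp only: of_nat_power)
      thus ?thesis using a1 by (simp add: mn_def of_nat_diff)
    qed
    have "\<not> int mn dvd int a ^ r - 1"
      using lo hi by (meson zdvd_not_zless)
    thus "\<not> int mn dvd z ^ n - 1"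
      using c1 by (metis cong_iff_dvd_diff cong_trans cong_sym cong_refl)
  }
qed

lemma ee_lin: assumes "N * c = l - u" shows "N * ee l c u n = l^n - u^n"
proof (induction n)
  case (Suc n)
  have "N * ee l c u (Suc n) = l^n * (N * c) + u * (N * ee l c u n)" by (simp add: algebra_simps)
  also have "\<dots> = l^(Suc n) - u^(Suc n)" unfolding Suc.IH assms by (simp add: algebra_simps)
  finally show ?case .
qed simp

lemma ee_geom: "N \<noteq> 0 \<Longrightarrow> ee l ((l - u) / N) u n = (l^n - u^n) / N"
  using ee_lin[of N "(l - u) / N" l u n] by (simp add: field_simps)

lemma ee_unip: "ee 1 c 1 n = of_nat n * c"
  by (induction n) (simp_all add: algebra_simps)

lemma int_div_Ints: "y \<noteq> 0 \<Longrightarrow> (of_int x / of_int y :: rat) \<in> \<int> \<longleftrightarrow> y dvd x"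
proof -
  assume y0: "y \<noteq> 0"
  show ?thesis proof
  assume "(of_int x / of_int y :: rat) \<in> \<int>"
  then obtain k where k: "(of_int x / of_int y :: rat) = of_int k" by (auto elim: Ints_cases)
  show "y dvd x"
  proof (cases "y = 0")
    case True
    with y0 show ?thesis by simp
  next
    case False
    with k have "(of_int x :: rat) = of_int (k * y)" by (simp add: field_simps)
    hence "x = k * y" by linarith
    then show ?thesis by simp
  qed
next
  assume "y dvd x"
  then obtain k where "x = y * k" by blast
  thus "(of_int x / of_int y :: rat) \<in> \<int>" by (cases "y = 0") auto
qed
qed

lemma general_c:
  fixes m z :: int and b :: nat and P :: "nat \<Rightarrow> bool"
  assumes m0: "m \<noteq> 0"
    and P0: "P 0"
    and Pd: "\<And>n. P n \<Longrightarrow> m ^ b dvd z ^ n - 1"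
    and nP: "\<And>n. 0 < n \<Longrightarrow> \<not> P n \<Longrightarrow> \<not> m dvd z ^ n - 1"
  shows "int_pow_set (tri (of_int m) ((of_int m - of_int (m*z)) / of_int (m^b)) (of_int (m*z)))
     = {n. P n \<or> b \<le> n}"
proof -
  have ee: "ee (of_int m) ((of_int m - of_int (m*z)) / of_int (m^b)) (of_int (m*z)) n
      = of_int (m^n * (1 - z^n)) / of_int (m^b)" for n
    using m0 by (subst ee_geom) (simp_all add: algebra_simps power_mult_distrib)
  have key: "m^b dvd m^n * (1 - z^n) \<longleftrightarrow> P n \<or> b \<le> n" for n
  proof
    assume d: "m^b dvd m^n * (1 - z^n)"
    show "P n \<or> b \<le> n"
    proof (rule ccontr)
      assume "\<not> (P n \<or> b \<le> n)"
      hence nP': "\<not> P n" and nb: "n < b" by auto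
      have n0: "0 < n" using nP' P0 by (cases n) auto
      have "m^n * m^(b-n) dvd m^n * (1 - z^n)" using d nb
        by (metis le_add_diff_inverse less_imp_le power_add)
      hence "m^(b-n) dvd 1 - z^n" using m0 by simp
      moreover have "m dvd m^(b-n)" using nb by simp
      ultimately have "m dvd 1 - z^n" by (rule dvd_trans[rotated])
      hence "m dvd z^n - 1" by (simp add: dvd_diff_commute)
      with nP[OF n0 nP'] show False by simp
    qed
  next
    assume "P n \<or> b \<le> n"
    then show "m^b dvd m^n * (1 - z^n)"
    proof
      assume "P n"
      hence "m^b dvd 1 - z^n" using Pd by (simp add: dvd_diff_commute)
      thus ?thesis by simp
    next
      assume "b \<le> n"
      hence "m^b dvd m^n" by (simp add: le_imp_power_dvd)
      thus ?thesis by simp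
    qed
  qed
  show ?thesis
    unfolding int_pow_set_tri ee int_div_Ints[OF power_not_zero[OF m0]] key
    by (auto simp flip: of_int_power)
qed

lemma rat_pow_Ints:
  fixes q :: rat
  assumes "q ^ n \<in> \<int>" "0 < n"
  shows "q \<in> \<int>"
proof -
  obtain p d where pd: "quotient_of q = (p, d)" by (cases "quotient_of q")
  have qd: "q = of_int p / of_int d" using pd by (rule quotient_of_div)
  have d0: "d > 0" using pd by (rule quotient_of_denom_pos)
  have cop: "coprime p d" using pd by (rule quotient_of_coprime)
  obtain k where k: "q ^ n = of_int k" using assms(1) by (auto elim: Ints_cases)
  have "(of_int p / of_int d :: rat) ^ n = of_int k" using k qd by simp
  hence "(of_int (p ^ n) :: rat) = of_int (k * d ^ n)" using d0
    by (simp add: power_divide field_simps)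
  hence "p ^ n = k * d ^ n" by linarith
  hence "d dvd p ^ n" using assms(2) by (simp add: dvd_power)
  moreover have "coprime (p ^ n) d" using cop by simp
  ultimately have "is_unit d" by (metis coprime_common_divisor dvd_refl)
  hence "d = 1" using d0 by simp
  thus ?thesis using qd by simp
qed

lemma pow1x1: "A \<in> carrier_mat 1 1 \<Longrightarrow> (A ^\<^sub>m n) $$ (0,0) = (A $$ (0,0)) ^ n"
proof (induction n)
  case 0 then show ?case by simp
next
  case (Suc n)
  have "A ^\<^sub>m n \<in> carrier_mat 1 1" using Suc.prems by simp
  then show ?case using Suc by (simp add: scalar_prod_def power_commutes)
qed

lemma lower_bound:
  fixes S :: "nat set"
  assumes n1: "1 \<notin> S" and n0: "n0 \<in> S" "0 < n0"
    and ex: "\<exists>A \<in> carrier_mat 2 2. S = int_pow_set A"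
  shows "mat_dim S = 2"
  unfolding mat_dim_def
proof (rule Least_equality)
  show "\<exists>A \<in> carrier_mat 2 2. S = int_pow_set A" by (rule ex)
next
  fix d assume "\<exists>A \<in> carrier_mat d d. S = int_pow_set A"
  then obtain A where A: "A \<in> carrier_mat d d" and S: "S = int_pow_set A" by blast
  show "2 \<le> d"
  proof (rule ccontr)
    assume "\<not> 2 \<le> d"
    hence "d = 0 \<or> d = 1" by auto
    thus False
    proof
      assume "d = 0"
      hence "1 \<in> int_pow_set A" using A by (simp add: int_pow_set_def)
      thus False using n1 S by simp
    next
      assume d1: "d = 1"
      have "int_pow_set A = {n. (A $$ (0,0)) ^ n \<in> \<int>}"
        using A d1 by (auto simp: int_pow_set_def pow1x1)
      with S n0 n1 have "(A $$ (0,0)) ^ n0 \<in> \<int>" "A $$ (0,0) \<notin> \<int>" by auto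
      thus False using rat_pow_Ints n0(2) by blast
    qed
  qed
qed

lemma cyc_set: "cyclic_sg a = {n. a dvd n}"
  by (auto simp: cyclic_sg_def dvd_def mult.commute)

lemma ord_set: "ordinary_sg b = {n. n = 0 \<or> b \<le> n}"
  by (auto simp: ordinary_sg_def)

lemma union_set: "cyclic_sg a \<union> ordinary_sg b = {n. a dvd n \<or> b \<le> n}"
  by (auto simp: cyc_set ord_set)

lemma part_a: assumes "a \<ge> (2::nat)" shows "mat_dim (cyclic_sg a) = 2"
proof (rule lower_bound[of _ a])
  show "1 \<notin> cyclic_sg a" using assms by (simp add: cyc_set)
  show "a \<in> cyclic_sg a" "0 < a" using assms by (auto simp: cyc_set)
  have "int_pow_set (tri 1 (1 / of_nat a) 1) = {n. a dvd n}"
  proof -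
    have "(of_nat n * (1 / of_nat a) :: rat) = of_int (int n) / of_int (int a)" for n by simp
    hence "(of_nat n * (1 / of_nat a) :: rat) \<in> \<int> \<longleftrightarrow> a dvd n" for n
      using assms int_div_Ints[of "int a" "int n"] by simp
    thus ?thesis by (simp add: int_pow_set_tri ee_unip)
  qed
  thus "\<exists>A\<in>carrier_mat 2 2. cyclic_sg a = int_pow_set A"
    by (metis cyc_set tri_carrier)
qed

lemma part_b: assumes "b \<ge> (2::nat)" shows "mat_dim (ordinary_sg b) = 2"
proof (rule lower_bound[of _ b])
  show "1 \<notin> ordinary_sg b" using assms by (simp add: ord_set)
  show "b \<in> ordinary_sg b" "0 < b" using assms by (auto simp: ord_set)
  have "int_pow_set (tri (of_int 2) ((of_int 2 - of_int (2*0)) / of_int (2^b)) (of_int (2*0)))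
     = {n. n = 0 \<or> b \<le> n}"
    by (rule general_c) (auto simp: zero_power)
  thus "\<exists>A\<in>carrier_mat 2 2. ordinary_sg b = int_pow_set A"
    by (metis ord_set tri_carrier)
qed

lemma part_c: assumes "a \<ge> (2::nat)" "b \<ge> 2"
  shows "mat_dim (cyclic_sg a \<union> ordinary_sg b) = 2"
proof (rule lower_bound[of _ a])
  show "1 \<notin> cyclic_sg a \<union> ordinary_sg b" using assms by (simp add: union_set)
  show "a \<in> cyclic_sg a \<union> ordinary_sg b" "0 < a" using assms by (auto simp: union_set)
  define mn where "mn = a^a - 1"
  define z where "z = int a ^ (mn ^ (b - 1))"
  have "a^a \<ge> a^1" using assms by (intro power_increasing) auto
  hence "a^a \<ge> 2" using assms(1) by (metis order_trans power_one_right)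
  hence "mn \<noteq> 0" unfolding mn_def by linarith
  hence "int_pow_set (tri (of_int (int mn)) ((of_int (int mn) - of_int (int mn*z)) / of_int (int mn^b)) (of_int (int mn*z)))
     = {n. a dvd n \<or> b \<le> n}"
    using nt_facts[of a b] assms unfolding mn_def[symmetric] z_def[symmetric]
    by (intro general_c) auto
  thus "\<exists>A\<in>carrier_mat 2 2. cyclic_sg a \<union> ordinary_sg b = int_pow_set A"
    by (metis union_set tri_carrier)
qed

theorem theorem2p8:
  shows "(\<forall>a::nat. a \<ge> 2 \<longrightarrow> mat_dim (cyclic_sg a) = 2)
    \<and> (\<forall>b::nat. b \<ge> 2 \<longrightarrow> mat_dim (ordinary_sg b) = 2)
    \<and> (\<forall>a b::nat. a \<ge> 2 \<longrightarrow> b \<ge> 2 \<longrightarrow> mat_dim (cyclic_sg a \<union> ordinary_sg b) = 2)"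
  using part_a part_b part_c by blast

end
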